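(* Let $G$ be a finite group, $K$ an idempotent semifield, and $V$ an indecomposable representation of $G$ over $K$. Let $H\subseteq G$ be the stabilizer of some basis line of $V$ (so $H$ lies in the conjugacy class of subgroups corresponding to $V$), and pick a section $s:G/H\to G$ of the quotient map onto the set $G/H$ of left cosets. Then there is some $v\in V$ such that every element of $V$ can be written uniquely as $\sum_{g\in s(G/H)}a_g\,gv$ with $a_g\in K$. Moreover, every element of $V$ can be written uniquely as $\sum_{g\in G}a_g\,gv$ with $a_g\in K$ constant on left cosets, i.e. $a_{gh}=a_g$ for all $g\in G$, $h\in H$.
   Context: All semirings are commutative. A semifield is a semiring whose nonzero elements form a multiplicative group; idempotent means $a+a=a$ for all $a$. A representation of $G$ over $K$ is a $K$-linear action of $G$ on a free module $K^n$; it is indecomposable if it is not a direct sum of two nontrivial $G$-stable submodules. A basis line is a submodule spanned by a single vector of some basis; $G$ acts on basis lines by $g\cdot\mathrm{span}(v)=\mathrm{span}(gv)$. *)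

theory Defs
  imports "HOL-Algebra.Coset"
begin

class idem_semifield = comm_semiring_1 +
  assumes add_idem: "a + a = a"
  assumes nonzero_invertible: "a \<noteq> 0 \<Longrightarrow> \<exists>b. a * b = 1"

definition vadd :: "('n \<Rightarrow> 'k::comm_semiring_1) \<Rightarrow> ('n \<Rightarrow> 'k) \<Rightarrow> ('n \<Rightarrow> 'k)" where
  "vadd x y = (\<lambda>i. x i + y i)"

definition vscale :: "'k::comm_semiring_1 \<Rightarrow> ('n \<Rightarrow> 'k) \<Rightarrow> ('n \<Rightarrow> 'k)" where
  "vscale c x = (\<lambda>i. c * x i)"

definition lincomb :: "('a \<Rightarrow> 'k::comm_semiring_1) \<Rightarrow> ('a \<Rightarrow> 'n \<Rightarrow> 'k) \<Rightarrow> 'a set \<Rightarrow> ('n \<Rightarrow> 'k)" where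
  "lincomb c f B = (\<lambda>i. \<Sum>b\<in>B. c b * f b i)"

definition is_basis :: "('n::finite \<Rightarrow> 'k::comm_semiring_1) set \<Rightarrow> bool" where
  "is_basis B \<longleftrightarrow> finite B \<and>
     (\<forall>x. \<exists>!c. (\<forall>b. b \<notin> B \<longrightarrow> c b = 0) \<and> x = lincomb c (\<lambda>b. b) B)"

definition kspan :: "('n \<Rightarrow> 'k::comm_semiring_1) \<Rightarrow> ('n \<Rightarrow> 'k) set" where
  "kspan v = {vscale c v | c. True}"

definition is_rep :: "('g, 'm) monoid_scheme \<Rightarrow> ('g \<Rightarrow> ('n::finite \<Rightarrow> 'k::comm_semiring_1) \<Rightarrow> ('n \<Rightarrow> 'k)) \<Rightarrow> bool" where
  "is_rep G \<rho> \<longleftrightarrow>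
     (\<forall>g\<in>carrier G. \<forall>x y. \<rho> g (vadd x y) = vadd (\<rho> g x) (\<rho> g y)) \<and>
     (\<forall>g\<in>carrier G. \<forall>c x. \<rho> g (vscale c x) = vscale c (\<rho> g x)) \<and>
     (\<forall>x. \<rho> \<one>\<^bsub>G\<^esub> x = x) \<and>
     (\<forall>g\<in>carrier G. \<forall>h\<in>carrier G. \<forall>x. \<rho> (g \<otimes>\<^bsub>G\<^esub> h) x = \<rho> g (\<rho> h x))"

definition is_submodule :: "('n::finite \<Rightarrow> 'k::comm_semiring_1) set \<Rightarrow> bool" where
  "is_submodule W \<longleftrightarrow> (\<lambda>_. 0) \<in> W \<and> (\<forall>x\<in>W. \<forall>y\<in>W. vadd x y \<in> W) \<and>
     (\<forall>c. \<forall>x\<in>W. vscale c x \<in> W)"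

definition G_stable :: "('g, 'm) monoid_scheme \<Rightarrow> ('g \<Rightarrow> ('n \<Rightarrow> 'k) \<Rightarrow> ('n \<Rightarrow> 'k)) \<Rightarrow> ('n \<Rightarrow> 'k) set \<Rightarrow> bool" where
  "G_stable G \<rho> W \<longleftrightarrow> (\<forall>g\<in>carrier G. \<forall>x\<in>W. \<rho> g x \<in> W)"

definition is_direct_sum :: "('n::finite \<Rightarrow> 'k::comm_semiring_1) set \<Rightarrow> ('n \<Rightarrow> 'k) set \<Rightarrow> bool" where
  "is_direct_sum W1 W2 \<longleftrightarrow> (\<forall>x. \<exists>!p. fst p \<in> W1 \<and> snd p \<in> W2 \<and> x = vadd (fst p) (snd p))"

definition indecomposable :: "('g, 'm) monoid_scheme \<Rightarrow> ('g \<Rightarrow> ('n::finite \<Rightarrow> 'k::comm_semiring_1) \<Rightarrow> ('n \<Rightarrow> 'k)) \<Rightarrow> bool" where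
  "indecomposable G \<rho> \<longleftrightarrow>
     \<not> (\<exists>W1 W2. is_submodule W1 \<and> is_submodule W2 \<and> G_stable G \<rho> W1 \<and> G_stable G \<rho> W2 \<and>
          W1 \<noteq> {\<lambda>_. 0} \<and> W2 \<noteq> {\<lambda>_. 0} \<and> is_direct_sum W1 W2)"

definition lcosets :: "('g, 'm) monoid_scheme \<Rightarrow> 'g set \<Rightarrow> 'g set set" where
  "lcosets G H = (\<lambda>a. a <#\<^bsub>G\<^esub> H) ` carrier G"

end

theory Submission
  imports Defs
begin

lemma zsf: "(a::'k::idem_semifield) + b = 0 \<Longrightarrow> a = 0"
proof -
  assume h: "a + b = 0"
  have "a = a + (a + b)" using h by simp
  also have "\<dots> = (a + a) + b" by (simp add: add.assoc)
  also have "\<dots> = a + b" by (simp add: add_idem)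
  finally show ?thesis using h by simp
qed

lemma sum_zero_each:
  assumes "finite S" "(\<Sum>x\<in>S. F x) = (0::'k::idem_semifield)" "x \<in> S"
  shows "F x = 0"
  using assms
proof (induction S rule: finite_induct)
  case empty then show ?case by simp
next
  case (insert a S)
  have h: "F a + sum F S = 0" using insert by simp
  have "F a = 0" using zsf[OF h] .
  moreover have "sum F S = 0" using zsf[of "sum F S" "F a"] h by (simp add: add.commute)
  ultimately show ?case using insert by auto
qed

definition kinv :: "'k::idem_semifield \<Rightarrow> 'k" where "kinv a = (SOME b. a * b = 1)"

lemma kinv: "(a::'k::idem_semifield) \<noteq> 0 \<Longrightarrow> a * kinv a = 1"
  unfolding kinv_def by (rule someI_ex) (rule nonzero_invertible)

lemma kinv': "(a::'k::idem_semifield) \<noteq> 0 \<Longrightarrow> kinv a * a = 1"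
  using kinv by (simp add: mult.commute)

lemma nzd: "(a::'k::idem_semifield) * b = 0 \<Longrightarrow> a \<noteq> 0 \<Longrightarrow> b = 0"
proof -
  assume h: "a * b = 0" "a \<noteq> 0"
  have "b = (kinv a * a) * b" using kinv'[OF h(2)] by simp
  also have "\<dots> = kinv a * (a * b)" by (simp add: mult.assoc)
  finally show ?thesis using h by simp
qed

lemma mult_nz: "(a::'k::idem_semifield) \<noteq> 0 \<Longrightarrow> b \<noteq> 0 \<Longrightarrow> a * b \<noteq> 0"
  using nzd by blast

lemma kinv_nz: "(a::'k::idem_semifield) \<noteq> 0 \<Longrightarrow> kinv a \<noteq> 0"
  using kinv by force

definition ev :: "'n \<Rightarrow> 'n \<Rightarrow> 'k::comm_semiring_1" where
  "ev k = (\<lambda>i. if i = k then 1 else 0)"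

definition lin :: "(('n \<Rightarrow> 'k::comm_semiring_1) \<Rightarrow> ('n \<Rightarrow> 'k)) \<Rightarrow> bool" where
  "lin f \<longleftrightarrow> (\<forall>x y. f (vadd x y) = vadd (f x) (f y)) \<and> (\<forall>c x. f (vscale c x) = vscale c (f x))"

lemma lin_zero: assumes "lin f" shows "f (\<lambda>_. 0) = (\<lambda>_. 0)"
proof -
  have "f (vscale 0 (\<lambda>_. 0)) = vscale 0 (f (\<lambda>_. 0))" using assms unfolding lin_def by blast
  then show ?thesis by (simp add: vscale_def)
qed

lemma lin_expand:
  fixes f :: "('n::finite \<Rightarrow> 'k::comm_semiring_1) \<Rightarrow> ('n \<Rightarrow> 'k)"
  assumes "lin f"
  shows "f x = (\<lambda>i. \<Sum>j\<in>UNIV. x j * f (ev j) i)"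
proof -
  have gen: "f (\<lambda>i. \<Sum>j\<in>S. x j * ev j i) = (\<lambda>i. \<Sum>j\<in>S. x j * f (ev j) i)" if "finite S" for S
    using that
  proof (induction S rule: finite_induct)
    case empty then show ?case using lin_zero[OF assms] by simp
  next
    case (insert a S)
    have "(\<lambda>i. \<Sum>j\<in>insert a S. x j * ev j i) = vadd (vscale (x a) (ev a)) (\<lambda>i. \<Sum>j\<in>S. x j * ev j i)"
      using insert by (simp add: vadd_def vscale_def)
    then have "f (\<lambda>i. \<Sum>j\<in>insert a S. x j * ev j i) = vadd (vscale (x a) (f (ev a))) (f (\<lambda>i. \<Sum>j\<in>S. x j * ev j i))"
      using assms unfolding lin_def by simp
    then show ?case using insert by (simp add: vadd_def vscale_def)
  qed
  have "x = (\<lambda>i. \<Sum>j\<in>UNIV. x j * ev j i)"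
    by (simp add: ev_def if_distrib cong: if_cong)
  then show ?thesis using gen[of UNIV] by simp
qed

lemma ev_inj:
  assumes "vscale c (ev k) = vscale c' (ev k')" "(c::'k::idem_semifield) \<noteq> 0"
  shows "k = k'"
proof (rule ccontr)
  assume "k \<noteq> k'"
  have "vscale c (ev k) k = vscale c' (ev k') k" using assms by simp
  then show False using \<open>k \<noteq> k'\<close> assms(2) by (simp add: vscale_def ev_def)
qed

lemma monomial:
  fixes f f' :: "('n::finite \<Rightarrow> 'k::idem_semifield) \<Rightarrow> ('n \<Rightarrow> 'k)"
  assumes lf: "lin f" and lf': "lin f'" and inv1: "\<And>x. f' (f x) = x" and inv2: "\<And>x. f (f' x) = x"
  shows "\<exists>k c. c \<noteq> 0 \<and> f (ev j) = vscale c (ev k)"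
proof -
  have "f (ev j) \<noteq> (\<lambda>_. 0)"
  proof
    assume "f (ev j) = (\<lambda>_. 0)"
    then have "ev j = (\<lambda>_. (0::'k))" using inv1[of "ev j"] lin_zero[OF lf'] by simp
    then have "ev j j = (0::'k)" by simp
    then show False by (simp add: ev_def)
  qed
  then obtain k where k: "f (ev j) k \<noteq> 0" by auto
  have supp: "f' (ev k) m = 0" if "m \<noteq> j" for m
  proof -
    have "(0::'k) = ev j m" using that by (simp add: ev_def)
    also have "\<dots> = f' (f (ev j)) m" using inv1 by simp
    also have "\<dots> = (\<Sum>l\<in>UNIV. f (ev j) l * f' (ev l) m)" by (subst lin_expand[OF lf']) simp
    finally have "f (ev j) k * f' (ev k) m = 0"
      using sum_zero_each[of UNIV "\<lambda>l. f (ev j) l * f' (ev l) m" k] by simp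
    then show ?thesis using nzd k by blast
  qed
  define b where "b = f' (ev k) j"
  have fb: "f' (ev k) = vscale b (ev j)"
  proof (rule ext)
    fix m show "f' (ev k) m = vscale b (ev j) m"
      using supp[of m] by (cases "m = j") (auto simp: vscale_def b_def ev_def)
  qed
  have ek: "ev k = vscale b (f (ev j))"
    using inv2[of "ev k"] fb lf unfolding lin_def by simp
  have bnz: "b \<noteq> 0"
  proof
    assume "b = 0"
    then have "ev k k = (0::'k)" using ek by (simp add: vscale_def)
    then show False by (simp add: ev_def)
  qed
  have "f (ev j) = vscale (kinv b) (ev k)"
  proof (rule ext)
    fix i
    have "vscale (kinv b) (ev k) i = kinv b * (b * f (ev j) i)" using ek by (simp add: vscale_def)
    also have "\<dots> = f (ev j) i" using kinv'[OF bnz] by (simp add: mult.assoc[symmetric])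
    finally show "f (ev j) i = vscale (kinv b) (ev k) i" by simp
  qed
  then show ?thesis using kinv_nz[OF bnz] by blast
qed

lemma basis_single:
  fixes B :: "('n::finite \<Rightarrow> 'k::idem_semifield) set"
  assumes "is_basis B" "v0 \<in> B"
  shows "\<exists>i0 \<beta>. \<beta> \<noteq> 0 \<and> v0 = vscale \<beta> (ev i0)"
proof -
  have fin: "finite B" using assms unfolding is_basis_def by blast
  have "\<forall>i. \<exists>c. (\<forall>b. b \<notin> B \<longrightarrow> c b = 0) \<and> ev i = lincomb c (\<lambda>b. b) B"
    using assms unfolding is_basis_def by metis
  then obtain C where C: "\<And>i. ev i = lincomb (C i) (\<lambda>b. b) B" by metis
  define d where "d b = (if b \<in> B then \<Sum>i\<in>UNIV. v0 i * C i b else 0)" for b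
  define ind where "ind b = (if b = v0 then 1 else (0::'k))" for b
  have Cm: "ev i m = (\<Sum>b\<in>B. C i b * b m)" for i m
    using C[of i] unfolding lincomb_def by (metis)
  have d1: "v0 = lincomb d (\<lambda>b. b) B"
  proof (rule ext)
    fix m
    have "lincomb d (\<lambda>b. b) B m = (\<Sum>b\<in>B. (\<Sum>i\<in>UNIV. v0 i * C i b) * b m)"
      unfolding lincomb_def d_def by (simp cong: sum.cong)
    also have "\<dots> = (\<Sum>i\<in>UNIV. v0 i * (\<Sum>b\<in>B. C i b * b m))"
      by (simp add: sum_distrib_left sum_distrib_right mult.assoc sum.swap[of _ B])
    also have "\<dots> = (\<Sum>i\<in>UNIV. v0 i * ev i m)" by (simp add: Cm)
    also have "\<dots> = v0 m" by (simp add: ev_def if_distrib cong: if_cong)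
    finally show "v0 m = lincomb d (\<lambda>b. b) B m" by simp
  qed
  have d2: "v0 = lincomb ind (\<lambda>b. b) B"
  proof (rule ext)
    fix m
    have "lincomb ind (\<lambda>b. b) B m = (\<Sum>b\<in>B. if b = v0 then b m else 0)"
      unfolding lincomb_def ind_def by (rule sum.cong) auto
    also have "\<dots> = v0 m" using fin assms(2) by simp
    finally show "v0 m = lincomb ind (\<lambda>b. b) B m" by simp
  qed
  have u: "\<exists>!c. (\<forall>b. b \<notin> B \<longrightarrow> c b = 0) \<and> v0 = lincomb c (\<lambda>b. b) B"
    using assms(1) unfolding is_basis_def by blast
  have dz: "\<forall>b. b \<notin> B \<longrightarrow> d b = 0" by (simp add: d_def)
  have iz: "\<forall>b. b \<notin> B \<longrightarrow> ind b = 0" using assms(2) by (auto simp: ind_def)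
  have "d = ind" using u dz iz d1 d2 by blast
  then have "(\<Sum>i\<in>UNIV. v0 i * C i v0) = 1" using assms(2) unfolding d_def ind_def
    by (metis (mono_tags))
  then obtain i where i: "v0 i * C i v0 \<noteq> 0"
    by (metis (mono_tags, lifting) one_neq_zero sum.neutral)
  have "v0 m = 0" if "m \<noteq> i" for m
  proof -
    have "(\<Sum>b\<in>B. C i b * b m) = 0" using Cm[of i m] that by (simp add: ev_def)
    then have "C i v0 * v0 m = 0" using sum_zero_each[OF fin _ assms(2)] by blast
    moreover have "C i v0 \<noteq> 0" using i by auto
    ultimately show ?thesis using nzd by blast
  qed
  then have "v0 = vscale (v0 i) (ev i)" by (auto simp: vscale_def ev_def)
  moreover have "v0 i \<noteq> 0" using i by auto
  ultimately show ?thesis by blast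
qed


theorem lemma3p16:
  fixes G :: "('g, 'm) monoid_scheme"
    and \<rho> :: "'g \<Rightarrow> ('n::finite \<Rightarrow> 'k::idem_semifield) \<Rightarrow> ('n \<Rightarrow> 'k)"
    and B :: "('n \<Rightarrow> 'k) set" and v0 :: "'n \<Rightarrow> 'k"
    and H :: "'g set" and s :: "'g set \<Rightarrow> 'g"
  assumes "group G" and "finite (carrier G)"
    and "is_rep G \<rho>" and "indecomposable G \<rho>"
    and "is_basis B" and "v0 \<in> B"
    and "H = {g \<in> carrier G. kspan (\<rho> g v0) = kspan v0}"
    and "\<forall>C\<in>lcosets G H. s C \<in> C"
  shows "\<exists>v. (\<forall>x. \<exists>!a. (\<forall>g. g \<notin> s ` lcosets G H \<longrightarrow> a g = 0) \<and>
                      x = lincomb a (\<lambda>g. \<rho> g v) (s ` lcosets G H))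
          \<and> (\<forall>x. \<exists>!a. (\<forall>g. g \<notin> carrier G \<longrightarrow> a g = 0) \<and>
                      (\<forall>g\<in>carrier G. \<forall>h\<in>H. a (g \<otimes>\<^bsub>G\<^esub> h) = a g) \<and>
                      x = lincomb a (\<lambda>g. \<rho> g v) (carrier G))"
proof -
  interpret grp: group G by fact
  note rep = assms(3)[unfolded is_rep_def]
  have rlin: "lin (\<rho> g)" if "g \<in> carrier G" for g
    using rep that unfolding lin_def by blast
  have rmult: "\<rho> (g \<otimes>\<^bsub>G\<^esub> h) x = \<rho> g (\<rho> h x)" if "g \<in> carrier G" "h \<in> carrier G" for g h x
    using rep that by blast
  have rsc: "\<rho> g (vscale c x) = vscale c (\<rho> g x)" if "g \<in> carrier G" for g c x
    using rep that by blast
  have rinv1: "\<rho> (inv\<^bsub>G\<^esub> g) (\<rho> g x) = x" if "g \<in> carrier G" for g x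
    using rmult[of "inv\<^bsub>G\<^esub> g" g x] that rep by simp
  have rinv2: "\<rho> g (\<rho> (inv\<^bsub>G\<^esub> g) x) = x" if "g \<in> carrier G" for g x
    using rmult[of g "inv\<^bsub>G\<^esub> g" x] that rep by simp
  have mono: "\<exists>k c. c \<noteq> 0 \<and> \<rho> g (ev j) = vscale c (ev k)" if "g \<in> carrier G" for g j
    using monomial[OF rlin[OF that] rlin[OF grp.inv_closed[OF that]]] rinv1 rinv2 that by blast
  obtain i0 \<beta> where \<beta>: "\<beta> \<noteq> 0" "v0 = vscale \<beta> (ev i0)"
    using basis_single[OF assms(5,6)] by blast
  have vsvs: "vscale a (vscale b x) = vscale (a * b) x" for a b :: 'k and x :: "'n \<Rightarrow> 'k"
    by (simp add: vscale_def mult.assoc)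
  have ex_rep: "\<exists>k c. c \<noteq> 0 \<and> \<rho> g v0 = vscale c (ev k)" if gG: "g \<in> carrier G" for g
  proof -
    obtain k c where kc: "c \<noteq> 0" "\<rho> g (ev i0) = vscale c (ev k)" using mono[OF gG] by blast
    have "\<rho> g v0 = vscale (\<beta> * c) (ev k)" using \<beta> kc rsc[OF gG] vsvs by simp
    then show ?thesis using mult_nz[OF \<beta>(1) kc(1)] by blast
  qed
  define \<pi> where "\<pi> g = (SOME k. \<exists>c. c \<noteq> 0 \<and> \<rho> g v0 = vscale c (ev k))" for g
  define \<mu> where "\<mu> g = (SOME c. c \<noteq> 0 \<and> \<rho> g v0 = vscale c (ev (\<pi> g)))" for g
  have rep0: "\<mu> g \<noteq> 0 \<and> \<rho> g v0 = vscale (\<mu> g) (ev (\<pi> g))" if "g \<in> carrier G" for g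
  proof -
    have "\<exists>c. c \<noteq> 0 \<and> \<rho> g v0 = vscale c (ev (\<pi> g))"
      unfolding \<pi>_def by (rule someI_ex) (rule ex_rep[OF that])
    then show ?thesis unfolding \<mu>_def by (rule someI_ex)
  qed
  have r\<mu>: "\<mu> g \<noteq> 0" and rv: "\<rho> g v0 = vscale (\<mu> g) (ev (\<pi> g))" if "g \<in> carrier G" for g
    using rep0[OF that] by auto
  define Orb where "Orb = \<pi> ` carrier G"
  have claimA: "\<rho> g (ev j) i = 0" if g: "g \<in> carrier G" and j: "j \<in> Orb" and i: "i \<notin> Orb" for g j i
  proof -
    obtain g' where g': "g' \<in> carrier G" "j = \<pi> g'" using j Orb_def by blast
    have gg: "g \<otimes>\<^bsub>G\<^esub> g' \<in> carrier G" using g g' by simp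
    have "\<rho> (g \<otimes>\<^bsub>G\<^esub> g') v0 = \<rho> g (\<rho> g' v0)" using rmult g g' by simp
    also have "\<dots> = vscale (\<mu> g') (\<rho> g (ev j))" using rv[OF g'(1)] g'(2) rsc[OF g] by simp
    finally have "vscale (\<mu> (g \<otimes>\<^bsub>G\<^esub> g')) (ev (\<pi> (g \<otimes>\<^bsub>G\<^esub> g'))) i = vscale (\<mu> g') (\<rho> g (ev j)) i"
      using rv[OF gg] by simp
    moreover have "\<pi> (g \<otimes>\<^bsub>G\<^esub> g') \<noteq> i" using i gg Orb_def by blast
    ultimately have "\<mu> g' * \<rho> g (ev j) i = 0" by (simp add: vscale_def ev_def)
    then show ?thesis using nzd r\<mu>[OF g'(1)] by blast
  qed
  have OU: "Orb = UNIV"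
  proof (rule ccontr)
    assume "Orb \<noteq> UNIV"
    then obtain i1 where i1: "i1 \<notin> Orb" by blast
    define W1 where "W1 = {x :: 'n \<Rightarrow> 'k. \<forall>i. i \<notin> Orb \<longrightarrow> x i = 0}"
    define W2 where "W2 = {x :: 'n \<Rightarrow> 'k. \<forall>i. i \<in> Orb \<longrightarrow> x i = 0}"
    have sub1: "is_submodule W1" unfolding is_submodule_def W1_def by (simp add: vadd_def vscale_def)
    have sub2: "is_submodule W2" unfolding is_submodule_def W2_def by (simp add: vadd_def vscale_def)
    have st1: "G_stable G \<rho> W1"
      unfolding G_stable_def
    proof (intro ballI)
      fix g x assume g: "g \<in> carrier G" and x: "x \<in> W1"
      have "\<rho> g x i = 0" if i: "i \<notin> Orb" for i
      proof -
        have "\<rho> g x i = (\<Sum>j\<in>UNIV. x j * \<rho> g (ev j) i)" by (subst lin_expand[OF rlin[OF g]]) simp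
        also have "\<dots> = 0"
        proof (rule sum.neutral, intro ballI)
          fix j show "x j * \<rho> g (ev j) i = 0"
            using claimA[OF g _ i, of j] x W1_def by (cases "j \<in> Orb") auto
        qed
        finally show ?thesis .
      qed
      then show "\<rho> g x \<in> W1" unfolding W1_def by blast
    qed
    have st2: "G_stable G \<rho> W2"
      unfolding G_stable_def
    proof (intro ballI)
      fix g x assume g: "g \<in> carrier G" and x: "x \<in> W2"
      have "\<rho> g x i = 0" if i: "i \<in> Orb" for i
      proof -
        have "\<rho> g x i = (\<Sum>j\<in>UNIV. x j * \<rho> g (ev j) i)" by (subst lin_expand[OF rlin[OF g]]) simp
        also have "\<dots> = 0"
        proof (rule sum.neutral, intro ballI)
          fix j
          have "\<rho> g (ev j) i = 0" if j: "j \<notin> Orb"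
          proof -
            obtain k c where kc: "c \<noteq> 0" "\<rho> g (ev j) = vscale c (ev k)" using mono[OF g] by blast
            show ?thesis
            proof (cases "k = i")
              case False then show ?thesis using kc by (simp add: vscale_def ev_def)
            next
              case True
              have ig: "inv\<^bsub>G\<^esub> g \<in> carrier G" using g by simp
              have "ev j = \<rho> (inv\<^bsub>G\<^esub> g) (\<rho> g (ev j))" using rinv1[OF g] by simp
              also have "\<dots> = vscale c (\<rho> (inv\<^bsub>G\<^esub> g) (ev i))" using kc True rsc[OF ig] by simp
              finally have "ev j j = vscale c (\<rho> (inv\<^bsub>G\<^esub> g) (ev i)) j" by simp
              then have "(1::'k) = 0" using claimA[OF ig i j] by (simp add: ev_def vscale_def)
              then show ?thesis by simp
            qed
          qed
          then show "x j * \<rho> g (ev j) i = 0"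
            using x W2_def by (cases "j \<in> Orb") auto
        qed
        finally show ?thesis .
      qed
      then show "\<rho> g x \<in> W2" unfolding W2_def by blast
    qed
    have ds: "is_direct_sum W1 W2"
      unfolding is_direct_sum_def
    proof
      fix x :: "'n \<Rightarrow> 'k"
      let ?p = "(\<lambda>i. if i \<in> Orb then x i else 0, \<lambda>i. if i \<in> Orb then 0 else x i)"
      show "\<exists>!p. fst p \<in> W1 \<and> snd p \<in> W2 \<and> x = vadd (fst p) (snd p)"
      proof (rule ex1I[of _ ?p])
        show "fst ?p \<in> W1 \<and> snd ?p \<in> W2 \<and> x = vadd (fst ?p) (snd ?p)"
          by (auto simp: W1_def W2_def vadd_def)
      next
        fix p assume p: "fst p \<in> W1 \<and> snd p \<in> W2 \<and> x = vadd (fst p) (snd p)"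
        obtain p1 p2 where pp: "p = (p1, p2)" by (cases p)
        have "p1 i = (if i \<in> Orb then x i else 0) \<and> p2 i = (if i \<in> Orb then 0 else x i)" for i
          using p pp by (auto simp: W1_def W2_def vadd_def)
        then show "p = ?p" using pp by auto
      qed
    qed
    have evnz: "ev k \<noteq> (\<lambda>_. (0::'k))" for k :: 'n
    proof
      assume "ev k = (\<lambda>_. (0::'k))" then have "ev k k = (0::'k)" by simp
      then show False by (simp add: ev_def)
    qed
    have "ev (\<pi> \<one>\<^bsub>G\<^esub>) \<in> W1" unfolding W1_def Orb_def by (auto simp: ev_def)
    then have n1: "W1 \<noteq> {\<lambda>_. 0}" using evnz by blast
    have "ev i1 \<in> W2" unfolding W2_def using i1 by (auto simp: ev_def)
    then have n2: "W2 \<noteq> {\<lambda>_. 0}" using evnz by blast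
    show False using assms(4) sub1 sub2 st1 st2 n1 n2 ds unfolding indecomposable_def by blast
  qed
  have kspan_sc: "kspan (vscale c w) = kspan w" if "c \<noteq> 0" for c :: 'k and w :: "'n \<Rightarrow> 'k"
  proof
    show "kspan (vscale c w) \<subseteq> kspan w" unfolding kspan_def using vsvs by blast
    show "kspan w \<subseteq> kspan (vscale c w)" unfolding kspan_def
    proof clarify
      fix d
      have "vscale d w = vscale (d * kinv c) (vscale c w)"
        using vsvs kinv'[OF that] by (simp add: mult.assoc)
      then show "\<exists>d'. vscale d w = vscale d' (vscale c w) \<and> True" by blast
    qed
  qed
  have Hsub: "H \<subseteq> carrier G" using assms(7) by auto
  have coset: "g <#\<^bsub>G\<^esub> H = {g' \<in> carrier G. \<pi> g' = \<pi> g}" if g: "g \<in> carrier G" for g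
  proof
    show "g <#\<^bsub>G\<^esub> H \<subseteq> {g' \<in> carrier G. \<pi> g' = \<pi> g}"
    proof
      fix x assume "x \<in> g <#\<^bsub>G\<^esub> H"
      then obtain h where h: "h \<in> H" "x = g \<otimes>\<^bsub>G\<^esub> h" unfolding l_coset_def by blast
      have hG: "h \<in> carrier G" and hk: "kspan (\<rho> h v0) = kspan v0" using h(1) unfolding assms(7) by blast+
      have "\<rho> h v0 = vscale 1 (\<rho> h v0)" by (simp add: vscale_def)
      then have "\<rho> h v0 \<in> kspan (\<rho> h v0)" unfolding kspan_def by blast
      then have "\<rho> h v0 \<in> kspan v0" using hk by simp
      then obtain c where c: "\<rho> h v0 = vscale c v0" unfolding kspan_def by blast
      have xG: "x \<in> carrier G" using h hG g by simp
      have "vscale (\<mu> x) (ev (\<pi> x)) = \<rho> (g \<otimes>\<^bsub>G\<^esub> h) v0" using rv[OF xG] h by simp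
      also have "\<dots> = \<rho> g (\<rho> h v0)" using rmult g hG by simp
      also have "\<dots> = vscale (c * \<mu> g) (ev (\<pi> g))" using c rsc[OF g] rv[OF g] vsvs by simp
      finally have "\<pi> x = \<pi> g" by (rule ev_inj[OF _ r\<mu>[OF xG]])
      then show "x \<in> {g' \<in> carrier G. \<pi> g' = \<pi> g}" using xG by simp
    qed
    show "{g' \<in> carrier G. \<pi> g' = \<pi> g} \<subseteq> g <#\<^bsub>G\<^esub> H"
    proof clarify
      fix g' assume g': "g' \<in> carrier G" "\<pi> g' = \<pi> g"
      define h where "h = inv\<^bsub>G\<^esub> g \<otimes>\<^bsub>G\<^esub> g'"
      have ig: "inv\<^bsub>G\<^esub> g \<in> carrier G" using g by simp
      have hG: "h \<in> carrier G" using g g' h_def by simp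
      have gh: "g \<otimes>\<^bsub>G\<^esub> h = g'" unfolding h_def using g g'
        by (simp add: grp.m_assoc[symmetric])
      let ?k = "\<pi> g"
      have "v0 = \<rho> (inv\<^bsub>G\<^esub> g) (\<rho> g v0)" using rinv1[OF g] by simp
      also have "\<dots> = vscale (\<mu> g) (\<rho> (inv\<^bsub>G\<^esub> g) (ev ?k))" using rv[OF g] rsc[OF ig] by simp
      finally have "vscale (kinv (\<mu> g)) v0 = vscale (kinv (\<mu> g) * \<mu> g) (\<rho> (inv\<^bsub>G\<^esub> g) (ev ?k))"
        using vsvs by metis
      then have iev: "\<rho> (inv\<^bsub>G\<^esub> g) (ev ?k) = vscale (kinv (\<mu> g)) v0"
        using kinv'[OF r\<mu>[OF g]] by (simp add: vscale_def)
      have "\<rho> h v0 = \<rho> (inv\<^bsub>G\<^esub> g) (\<rho> g' v0)" unfolding h_def using rmult ig g' by simp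
      also have "\<dots> = vscale (\<mu> g') (\<rho> (inv\<^bsub>G\<^esub> g) (ev ?k))" using rv[OF g'(1)] g'(2) rsc[OF ig] by simp
      also have "\<dots> = vscale (\<mu> g' * kinv (\<mu> g)) v0" using iev vsvs by simp
      finally have "kspan (\<rho> h v0) = kspan v0"
        using kspan_sc mult_nz[OF r\<mu>[OF g'(1)] kinv_nz[OF r\<mu>[OF g]]] by simp
      then have "h \<in> H" using assms(7) hG by simp
      then show "g' \<in> g <#\<^bsub>G\<^esub> H" unfolding l_coset_def using gh by blast
    qed
  qed
  have \<pi>H: "\<pi> (g \<otimes>\<^bsub>G\<^esub> h) = \<pi> g" if "g \<in> carrier G" "h \<in> H" for g h
  proof -
    have "g \<otimes>\<^bsub>G\<^esub> h \<in> g <#\<^bsub>G\<^esub> H" unfolding l_coset_def using that by blast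
    then show ?thesis using coset[OF that(1)] by simp
  qed
  have lc: "lincomb a (\<lambda>g. \<rho> g v0) T i = (\<Sum>g\<in>{g\<in>T. \<pi> g = i}. a g * \<mu> g)"
    if T: "T \<subseteq> carrier G" "finite T" for a T i
  proof -
    have "lincomb a (\<lambda>g. \<rho> g v0) T i = (\<Sum>g\<in>T. if \<pi> g = i then a g * \<mu> g else 0)"
      unfolding lincomb_def
    proof (rule sum.cong)
      fix g assume "g \<in> T" then have gG: "g \<in> carrier G" using T by blast
      show "a g * \<rho> g v0 i = (if \<pi> g = i then a g * \<mu> g else 0)"
        using rv[OF gG] by (auto simp: vscale_def ev_def)
    qed simp
    also have "\<dots> = (\<Sum>g\<in>{g\<in>T. \<pi> g = i}. a g * \<mu> g)" by (rule sum.inter_filter[OF T(2), symmetric])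
    finally show ?thesis .
  qed
  define S where "S = s ` lcosets G H"
  have sC: "s C \<in> C" if "C \<in> lcosets G H" for C using assms(8) that by blast
  have lcos: "\<exists>a\<in>carrier G. C = {g' \<in> carrier G. \<pi> g' = \<pi> a}" if Cin: "C \<in> lcosets G H" for C
  proof -
    obtain a where a: "a \<in> carrier G" "C = a <#\<^bsub>G\<^esub> H" using Cin unfolding lcosets_def by blast
    have "C = {g' \<in> carrier G. \<pi> g' = \<pi> a}" unfolding a(2) by (rule coset[OF a(1)])
    then show ?thesis using a(1) by blast
  qed
  have SG: "S \<subseteq> carrier G"
  proof
    fix g assume "g \<in> S"
    then obtain C where C: "C \<in> lcosets G H" "g = s C" unfolding S_def by blast
    have "s C \<in> C" by (rule sC[OF C(1)])
    then show "g \<in> carrier G" using lcos[OF C(1)] C(2) by auto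
  qed
  have Sfin: "finite S" using SG assms(2) finite_subset by blast
  have lcos2: "C = {g' \<in> carrier G. \<pi> g' = \<pi> (s C)}" if Cin: "C \<in> lcosets G H" for C
  proof -
    obtain a where a: "a \<in> carrier G" "C = {g' \<in> carrier G. \<pi> g' = \<pi> a}" using lcos[OF Cin] by blast
    have "s C \<in> C" by (rule sC[OF Cin])
    then have e: "\<pi> (s C) = \<pi> a" using a(2) by (metis (mono_tags, lifting) mem_Collect_eq)
    from a(2) have "C = {g' \<in> carrier G. \<pi> g' = \<pi> a}" .
    also have "\<dots> = {g' \<in> carrier G. \<pi> g' = \<pi> (s C)}" using e by simp
    finally show ?thesis .
  qed
  have Sex: "\<exists>g\<in>S. \<pi> g = i" for i
  proof -
    have "i \<in> \<pi> ` carrier G" using OU unfolding Orb_def by simp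
    then obtain g where g: "g \<in> carrier G" "\<pi> g = i" by blast
    have C: "g <#\<^bsub>G\<^esub> H \<in> lcosets G H" unfolding lcosets_def using g(1) by (rule imageI)
    define t where "t = s (g <#\<^bsub>G\<^esub> H)"
    have "t \<in> g <#\<^bsub>G\<^esub> H" unfolding t_def by (rule sC[OF C])
    then have "\<pi> t = i" unfolding coset[OF g(1)] using g(2) by simp
    moreover have "t \<in> S" unfolding S_def t_def using C by (rule imageI)
    ultimately show ?thesis by blast
  qed
  have Sinj: "g1 = g2" if gs: "g1 \<in> S" "g2 \<in> S" "\<pi> g1 = \<pi> g2" for g1 g2
  proof -
    obtain C1 C2 where C: "C1 \<in> lcosets G H" "C2 \<in> lcosets G H" "g1 = s C1" "g2 = s C2"
      using gs(1,2) unfolding S_def by blast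
    have "C1 = C2" using lcos2[OF C(1)] lcos2[OF C(2)] C gs(3) by simp
    then show ?thesis using C by simp
  qed
  have Ssing: "{g\<in>S. \<pi> g = \<pi> g0} = {g0}" if "g0 \<in> S" for g0
  proof
    show "{g\<in>S. \<pi> g = \<pi> g0} \<subseteq> {g0}" using Sinj[OF _ that] by blast
    show "{g0} \<subseteq> {g\<in>S. \<pi> g = \<pi> g0}" using that by blast
  qed
  have P1: "\<exists>!a. (\<forall>g. g \<notin> S \<longrightarrow> a g = 0) \<and> x = lincomb a (\<lambda>g. \<rho> g v0) S" for x
  proof -
    define a where "a g = (if g \<in> S then x (\<pi> g) * kinv (\<mu> g) else 0)" for g
    show ?thesis
    proof (rule ex1I[of _ a])
      show "(\<forall>g. g \<notin> S \<longrightarrow> a g = 0) \<and> x = lincomb a (\<lambda>g. \<rho> g v0) S"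
      proof (intro conjI allI impI ext)
        fix g assume "g \<notin> S" then show "a g = 0" by (simp add: a_def)
      next
        fix i
        obtain g0 where g0: "g0 \<in> S" "\<pi> g0 = i" using Sex by blast
        have "lincomb a (\<lambda>g. \<rho> g v0) S i = a g0 * \<mu> g0"
          using lc[OF SG Sfin] Ssing[OF g0(1)] g0 by simp
        also have "\<dots> = x i" using g0 SG kinv'[OF r\<mu>, of g0] by (auto simp: a_def mult.assoc)
        finally show "x i = lincomb a (\<lambda>g. \<rho> g v0) S i" by simp
      qed
    next
      fix b assume b: "(\<forall>g. g \<notin> S \<longrightarrow> b g = 0) \<and> x = lincomb b (\<lambda>g. \<rho> g v0) S"
      show "b = a"
      proof
        fix g
        show "b g = a g"
        proof (cases "g \<in> S")
          case False then show ?thesis using b by (simp add: a_def)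
        next
          case True
          have gG: "g \<in> carrier G" using True SG by blast
          have "x (\<pi> g) = b g * \<mu> g" using b lc[OF SG Sfin] Ssing[OF True] by simp
          then have "x (\<pi> g) * kinv (\<mu> g) = b g" using kinv[OF r\<mu>[OF gG]] by (simp add: mult.assoc)
          then show ?thesis using True by (simp add: a_def)
        qed
      qed
    qed
  qed
  define M where "M i = (\<Sum>g\<in>{g\<in>carrier G. \<pi> g = i}. \<mu> g)" for i
  have Mnz: "M i \<noteq> 0" for i
  proof
    assume "M i = 0"
    have "i \<in> \<pi> ` carrier G" using OU unfolding Orb_def by simp
    then obtain g where g: "g \<in> carrier G" "\<pi> g = i" by blast
    have "\<mu> g = 0" using sum_zero_each[of "{g\<in>carrier G. \<pi> g = i}" \<mu> g] \<open>M i = 0\<close> g assms(2)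
      unfolding M_def by simp
    then show False using r\<mu>[OF g(1)] by simp
  qed
  have P2: "\<exists>!a. (\<forall>g. g \<notin> carrier G \<longrightarrow> a g = 0) \<and>
                      (\<forall>g\<in>carrier G. \<forall>h\<in>H. a (g \<otimes>\<^bsub>G\<^esub> h) = a g) \<and>
                      x = lincomb a (\<lambda>g. \<rho> g v0) (carrier G)" for x
  proof -
    define a where "a g = (if g \<in> carrier G then x (\<pi> g) * kinv (M (\<pi> g)) else 0)" for g
    show ?thesis
    proof (rule ex1I[of _ a])
      show "(\<forall>g. g \<notin> carrier G \<longrightarrow> a g = 0) \<and>
                      (\<forall>g\<in>carrier G. \<forall>h\<in>H. a (g \<otimes>\<^bsub>G\<^esub> h) = a g) \<and>
                      x = lincomb a (\<lambda>g. \<rho> g v0) (carrier G)"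
      proof (intro conjI allI impI ext ballI)
        fix g assume "g \<notin> carrier G" then show "a g = 0" by (simp add: a_def)
      next
        fix g h assume "g \<in> carrier G" "h \<in> H"
        then show "a (g \<otimes>\<^bsub>G\<^esub> h) = a g" using \<pi>H Hsub by (auto simp: a_def)
      next
        fix i
        have "lincomb a (\<lambda>g. \<rho> g v0) (carrier G) i
              = (\<Sum>g\<in>{g\<in>carrier G. \<pi> g = i}. (x i * kinv (M i)) * \<mu> g)"
          unfolding lc[OF subset_refl assms(2)] by (rule sum.cong) (auto simp: a_def)
        also have "\<dots> = x i * kinv (M i) * M i" unfolding M_def by (simp add: sum_distrib_left)
        also have "\<dots> = x i" using kinv'[OF Mnz] by (simp add: mult.assoc)
        finally show "x i = lincomb a (\<lambda>g. \<rho> g v0) (carrier G) i" by simp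
      qed
    next
      fix b assume b: "(\<forall>g. g \<notin> carrier G \<longrightarrow> b g = 0) \<and>
                      (\<forall>g\<in>carrier G. \<forall>h\<in>H. b (g \<otimes>\<^bsub>G\<^esub> h) = b g) \<and>
                      x = lincomb b (\<lambda>g. \<rho> g v0) (carrier G)"
      show "b = a"
      proof
        fix g
        show "b g = a g"
        proof (cases "g \<in> carrier G")
          case False then show ?thesis using b by (simp add: a_def)
        next
          case True
          have const: "b g' = b g" if "g' \<in> {g'\<in>carrier G. \<pi> g' = \<pi> g}" for g'
          proof -
            have "g' \<in> g <#\<^bsub>G\<^esub> H" using coset[OF True] that by simp
            then obtain h where "h \<in> H" "g' = g \<otimes>\<^bsub>G\<^esub> h" unfolding l_coset_def by blast
            then show ?thesis using b True by simp
          qed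
          have "x (\<pi> g) = (\<Sum>g'\<in>{g'\<in>carrier G. \<pi> g' = \<pi> g}. b g' * \<mu> g')"
            using b lc[OF subset_refl assms(2)] by simp
          also have "\<dots> = (\<Sum>g'\<in>{g'\<in>carrier G. \<pi> g' = \<pi> g}. b g * \<mu> g')"
            by (rule sum.cong) (simp_all add: const)
          also have "\<dots> = b g * M (\<pi> g)" unfolding M_def by (simp add: sum_distrib_left)
          finally have "x (\<pi> g) * kinv (M (\<pi> g)) = b g" using kinv[OF Mnz] by (simp add: mult.assoc)
          then show ?thesis using True by (simp add: a_def)
        qed
      qed
    qed
  qed
  show ?thesis unfolding S_def[symmetric] by (rule exI[of _ v0]) (intro conjI allI P1 P2)
qed

end
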